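(* Fix $\ell\in\mathbb N$ and $a>0$, and assume $p_n\sim an^{-1/\ell}$. Then for each $j\in\{1,\dots,\ell\}$, $\Delta^{n,p_n}(j)\to\infty$ in probability as $n\to\infty$.
   Context: Let $p\in[0,1]$. Let $Z=(Z(t))_{t\ge0}$ be a standard Yule process: a continuous-time pure birth process started from $Z(0)=1$ in which each individual gives birth at rate $1$. Each newborn child is, independently of everything else, a clone of its parent (same genetic type) with probability $p$, and a mutant carrying a new genetic type with probability $1-p$. The ancestor has type $1$ and the successive mutants receive types $2,3,\dots$ in order of birth. For $i\in\mathbb N$, $Y_i^{(p)}(t)$ is the number of individuals of type $i$ at time $t$. Let $\tau_n=\inf\{t\ge0:Z(t)=n\}$. For $x\ge0$, $N^{n,p}(x)=\sum_{i\ge1}\mathbf 1_{\{Y_i^{(p)}(\tau_n)>x\}}$, and $\Delta^{n,p}(j)=N^{n,p}(j-1)-N^{n,p}(j)$ is the number of types with exactly $j$ individuals at time $\tau_n$. $a_n\sim b_n$ means $a_n/b_n\to1$. *)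

theory Defs
  imports "HOL-Probability.Probability" "HOL-Library.Landau_Symbols"
begin

text \<open>Embedded jump chain of the Yule process with clonal/mutant births.
  A state is (number of types so far, list of the types of the individuals).
  In the Yule process with rate-1 births, at each jump the parent is a
  uniformly chosen individual among the current ones; the child is a clone
  with probability p and otherwise gets the next fresh type.\<close>

definition yule_step :: "real \<Rightarrow> nat \<times> nat list \<Rightarrow> (nat \<times> nat list) pmf" where
  "yule_step p s =
     (case s of (nt, xs) \<Rightarrow>
        bind_pmf (pmf_of_set {0..<length xs}) (\<lambda>u.
        bind_pmf (bernoulli_pmf p) (\<lambda>clone.
          return_pmf (if clone then (nt, xs @ [xs ! u]) else (Suc nt, xs @ [Suc nt])))))"

fun yule_chain :: "real \<Rightarrow> nat \<Rightarrow> (nat \<times> nat list) pmf" where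
  "yule_chain p 0 = return_pmf (1, [1])"
| "yule_chain p (Suc m) = bind_pmf (yule_chain p m) (yule_step p)"

text \<open>State of the population at time tau_n (the n-th individual is born),
  i.e. after n - 1 births; meaningful for n >= 1.\<close>
definition yule_at_tau :: "real \<Rightarrow> nat \<Rightarrow> (nat \<times> nat list) pmf" where
  "yule_at_tau p n = yule_chain p (n - 1)"

definition type_count :: "nat \<times> nat list \<Rightarrow> nat \<Rightarrow> nat" where
  "type_count s i = count_list (snd s) i"

definition N_types :: "nat \<times> nat list \<Rightarrow> real \<Rightarrow> nat" where
  "N_types s x = card {i::nat. 1 \<le> i \<and> real (type_count s i) > x}"

definition Delta_types :: "nat \<times> nat list \<Rightarrow> nat \<Rightarrow> int" where
  "Delta_types s j = int (N_types s (real j - 1)) - int (N_types s (real j))"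

end

theory Submission
  imports Defs
begin


lemma set_yule_step:
  "xs \<noteq> [] \<Longrightarrow> set_pmf (yule_step q (nt, xs)) \<subseteq>
     (\<lambda>u. (nt, xs @ [xs ! u])) ` {0..<length xs} \<union> {(Suc nt, xs @ [Suc nt])}"
  unfolding yule_step_def
  by (auto simp: set_pmf_of_set split: if_splits)

lemma finite_yule_step: "snd s \<noteq> [] \<Longrightarrow> finite (set_pmf (yule_step q s))"
proof -
  obtain nt xs where e: "s = (nt, xs)" by (cases s)
  assume "snd s \<noteq> []"
  then show ?thesis unfolding e by (intro finite_subset[OF set_yule_step]) auto
qed

lemma yule_chain_inv:
  "s \<in> set_pmf (yule_chain q m) \<Longrightarrow>
     length (snd s) = Suc m \<and> (\<forall>x\<in>set (snd s). 1 \<le> x \<and> x \<le> fst s)"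
proof (induction m arbitrary: s)
  case 0 then show ?case by auto
next
  case (Suc m)
  then obtain s0 where s0: "s0 \<in> set_pmf (yule_chain q m)" "s \<in> set_pmf (yule_step q s0)" by auto
  obtain nt xs where e: "s0 = (nt, xs)" by (cases s0)
  have IH: "length xs = Suc m" "\<forall>x\<in>set xs. 1 \<le> x \<and> x \<le> nt" using Suc.IH[OF s0(1)] e by auto
  have "xs \<noteq> []" using IH(1) by auto
  from s0(2) set_yule_step[OF this, of q nt] e have "s \<in> (\<lambda>u. (nt, xs @ [xs ! u])) ` {0..<length xs} \<union> {(Suc nt, xs @ [Suc nt])}" by auto
  then show ?case using IH by (force)
qed

lemma finite_yule_chain: "finite (set_pmf (yule_chain q m))"
proof (induction m)
  case (Suc m)
  have "finite (\<Union>s\<in>set_pmf (yule_chain q m). set_pmf (yule_step q s))"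
    using Suc yule_chain_inv[of _ q m] by (intro finite_UN_I finite_yule_step) fastforce+
  then show ?case by simp
qed simp

lemma exp_bind_fin:
  fixes h :: "'b \<Rightarrow> real"
  assumes "finite (set_pmf p)" "\<And>x. x \<in> set_pmf p \<Longrightarrow> finite (set_pmf (f x))"
  shows "measure_pmf.expectation (bind_pmf p f) h = measure_pmf.expectation p (\<lambda>x. measure_pmf.expectation (f x) h)"
proof -
  have "measure_pmf.expectation (bind_pmf p f) h = (\<Sum>a\<in>set_pmf p. pmf p a *\<^sub>R measure_pmf.expectation (f a) h)"
    using assms by (intro pmf_expectation_bind) auto
  also have "\<dots> = measure_pmf.expectation p (\<lambda>x. measure_pmf.expectation (f x) h)"
    using assms by (subst integral_measure_pmf[of "set_pmf p"]) auto
  finally show ?thesis .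
qed

lemma exp_chain_Suc:
  fixes h :: "nat \<times> nat list \<Rightarrow> real"
  shows "measure_pmf.expectation (yule_chain q (Suc m)) h =
     measure_pmf.expectation (yule_chain q m) (\<lambda>s. measure_pmf.expectation (yule_step q s) h)"
proof -
  have "\<And>s. s \<in> set_pmf (yule_chain q m) \<Longrightarrow> finite (set_pmf (yule_step q s))"
    using yule_chain_inv[of _ q m] by (intro finite_yule_step) fastforce
  then show ?thesis by (simp add: exp_bind_fin finite_yule_chain)
qed

lemma exp_step:
  fixes h :: "nat \<times> nat list \<Rightarrow> real"
  assumes "xs \<noteq> []" "0 \<le> q" "q \<le> 1"
  shows "measure_pmf.expectation (yule_step q (nt, xs)) h =
    (\<Sum>u<length xs. q * h (nt, xs @ [xs ! u]) + (1 - q) * h (Suc nt, xs @ [Suc nt])) / length xs"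
proof -
  have "measure_pmf.expectation (yule_step q (nt, xs)) h =
     (\<Sum>u\<in>{0..<length xs}. measure_pmf.expectation (bernoulli_pmf q \<bind> (\<lambda>clone.
          return_pmf (if clone then (nt, xs @ [xs ! u]) else (Suc nt, xs @ [Suc nt])))) h /\<^sub>R real (card {0..<length xs}))"
    unfolding yule_step_def using assms
    by (simp only: prod.case, intro pmf_expectation_bind_pmf_of_set) (auto intro!: finite_subset[OF set_bind_pmf[THEN equalityD1]])
  also have "\<dots> = (\<Sum>u\<in>{0..<length xs}. (q * h (nt, xs @ [xs ! u]) + (1 - q) * h (Suc nt, xs @ [Suc nt])) / length xs)"
    using assms by (intro sum.cong refl) (simp add: map_pmf_def[symmetric] mult.commute divide_inverse)
  also have "\<dots> = (\<Sum>u<length xs. q * h (nt, xs @ [xs ! u]) + (1 - q) * h (Suc nt, xs @ [Suc nt])) / length xs"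
    by (simp add: sum_divide_distrib atLeast0LessThan)
  finally show ?thesis .
qed

lemma exp_mono_supp:
  fixes f g :: "'a \<Rightarrow> real"
  assumes "finite (set_pmf p)" "\<And>x. x \<in> set_pmf p \<Longrightarrow> f x \<le> g x"
  shows "measure_pmf.expectation p f \<le> measure_pmf.expectation p g"
  using assms by (intro integral_mono_AE) (auto simp: integrable_measure_pmf_finite AE_measure_pmf_iff)

lemma exp_cong_supp:
  fixes f g :: "'a \<Rightarrow> real"
  assumes "\<And>x. x \<in> set_pmf p \<Longrightarrow> f x = g x"
  shows "measure_pmf.expectation p f = measure_pmf.expectation p g"
  using assms by (intro integral_cong_AE) (auto simp: AE_measure_pmf_iff)

lemma prob_mono_supp:
  assumes "\<And>x. x \<in> set_pmf p \<Longrightarrow> x \<in> B \<Longrightarrow> x \<in> A"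
  shows "measure_pmf.prob p B \<le> measure_pmf.prob p A"
proof -
  have "measure_pmf.prob p B = measure_pmf.prob p (B \<inter> set_pmf p)" by (simp add: measure_Int_set_pmf)
  also have "\<dots> \<le> measure_pmf.prob p A" using assms by (intro measure_pmf.finite_measure_mono) auto
  finally show ?thesis .
qed

lemma markov_pmf:
  fixes f :: "'a \<Rightarrow> real"
  assumes "finite (set_pmf p)" "\<And>x. x \<in> set_pmf p \<Longrightarrow> 0 \<le> f x" "c > 0"
  shows "measure_pmf.prob p {x. c \<le> f x} \<le> measure_pmf.expectation p f / c"
  using integral_Markov_inequality_measure[of "measure_pmf p" f UNIV c] assms
  by (auto simp: integrable_measure_pmf_finite AE_measure_pmf_iff)



definition cA :: "nat \<Rightarrow> nat list \<Rightarrow> nat" where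
  "cA k xs = card {i. k \<le> count_list xs i}"
definition cS :: "nat \<Rightarrow> nat list \<Rightarrow> nat" where
  "cS r xs = card {i. count_list xs i = r}"

lemma count_list_pos_in: "0 < count_list xs i \<Longrightarrow> i \<in> set xs"
  by (induction xs) (auto split: if_splits)

lemma in_count_pos: "i \<in> set xs \<Longrightarrow> 0 < count_list xs i"
  by (induction xs) auto

lemma fin_geq: "1 \<le> k \<Longrightarrow> finite {i. k \<le> count_list xs i}"
  by (rule finite_subset[of _ "set xs"]) (auto intro: count_list_pos_in)

lemma fin_eq: "1 \<le> r \<Longrightarrow> finite {i. count_list xs i = r}"
  by (rule finite_subset[of _ "set xs"]) (auto intro: count_list_pos_in)

lemma cA_snoc:
  assumes "1 \<le> k"
  shows "cA k (xs @ [y]) = cA k xs + (if count_list xs y + 1 = k then 1 else 0)"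
proof (cases "count_list xs y + 1 = k")
  case True
  have "{i. k \<le> count_list (xs @ [y]) i} = insert y {i. k \<le> count_list xs i}"
    using True by auto
  moreover have "y \<notin> {i. k \<le> count_list xs i}" using True by auto
  ultimately show ?thesis using True fin_geq[OF assms, of xs] by (simp add: cA_def)
next
  case False
  have "{i. k \<le> count_list (xs @ [y]) i} = {i. k \<le> count_list xs i}"
    using False by auto
  then show ?thesis using False by (simp add: cA_def)
qed

lemma cS_eq:
  assumes "1 \<le> r"
  shows "cS r xs = cA r xs - cA (Suc r) xs" "cA (Suc r) xs \<le> cA r xs"
proof -
  have u: "{i. r \<le> count_list xs i} = {i. count_list xs i = r} \<union> {i. Suc r \<le> count_list xs i}" by auto
  have "cA r xs = cS r xs + cA (Suc r) xs"
    unfolding cA_def cS_def u using assms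
    by (intro card_Un_disjoint fin_eq fin_geq) auto
  then show "cS r xs = cA r xs - cA (Suc r) xs" "cA (Suc r) xs \<le> cA r xs" by auto
qed

lemma count_take_mono: "h \<le> s \<Longrightarrow> count_list (take h xs) i \<le> count_list (take s xs) i"
proof -
  assume "h \<le> s"
  then have "take s xs = take h xs @ take (s - h) (drop h xs)"
    by (metis le_add_diff_inverse take_add)
  then show ?thesis by simp
qed

lemma cA_mono_list:
  assumes "1 \<le> k" "\<And>i. count_list ys i \<le> count_list zs i"
  shows "cA k ys \<le> cA k zs"
  unfolding cA_def using assms
  by (intro card_mono fin_geq) (auto intro: order.trans)

lemma cA_take_mono: "1 \<le> k \<Longrightarrow> h \<le> s \<Longrightarrow> cA k (take h xs) \<le> cA k (take s xs)"
  by (intro cA_mono_list count_take_mono) auto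

lemma cA_take_le: "1 \<le> k \<Longrightarrow> cA k (take h xs) \<le> cA k xs"
  using cA_take_mono[of k h "length xs + h" xs] by simp

lemma positions_count_nat:
  "(\<Sum>u<length xs. (if count_list xs (xs ! u) = r then 1 else 0 :: nat)) = r * cS r xs"
proof -
  have "(\<Sum>u<length xs. (if count_list xs (xs ! u) = r then 1 else 0 :: nat))
      = sum_list (map (\<lambda>x. if count_list xs x = r then 1 else 0 :: nat) xs)"
    by (simp add: sum_list_sum_nth atLeast0LessThan)
  also have "\<dots> = (\<Sum>x\<in>set xs. count_list xs x * (if count_list xs x = r then 1 else 0))"
    by (rule sum_list_map_eq_sum_count)
  also have "\<dots> = (\<Sum>x\<in>set xs. (if count_list xs x = r then r else 0))"
    by (intro sum.cong) auto
  also have "\<dots> = (\<Sum>x\<in>{x\<in>set xs. count_list xs x = r}. r)"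
    using sum.inter_filter[of "set xs" "\<lambda>_. r" "\<lambda>x. count_list xs x = r"] by simp
  also have "\<dots> = r * card {x\<in>set xs. count_list xs x = r}" by simp
  also have "{x\<in>set xs. count_list xs x = r} = {i. count_list xs i = r} \<or> r = 0"
  proof (cases "r = 0")
    case False
    then show ?thesis using count_list_pos_in[of xs] by auto
  qed simp
  then have "r * card {x\<in>set xs. count_list xs x = r} = r * cS r xs"
    unfolding cS_def by auto
  finally show ?thesis .
qed

lemma positions_count:
  "(\<Sum>u<length xs. (if count_list xs (xs ! u) = r then 1 else 0 :: real)) = real r * real (cS r xs)"
proof -
  have "(\<Sum>u<length xs. (if count_list xs (xs ! u) = r then 1 else 0 :: real))
     = real (\<Sum>u<length xs. (if count_list xs (xs ! u) = r then 1 else 0 :: nat))"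
    by (simp add: of_nat_sum if_distrib cong: if_cong)
  then show ?thesis by (simp add: positions_count_nat)
qed

lemma cA_one: "cA 1 xs = card (set xs)"
  unfolding cA_def
  by (rule arg_cong[where f=card]) (auto intro: count_list_pos_in in_count_pos simp: Suc_le_eq)

lemma cA_init: "1 \<le> r \<Longrightarrow> cA (Suc r) [1] = 0"
  unfolding cA_def by auto



definition pi_r :: "real \<Rightarrow> nat \<Rightarrow> nat list \<Rightarrow> real" where
  "pi_r q r xs = q * real r * real (cS r xs) / real (length xs)"
definition Pi :: "real \<Rightarrow> nat \<Rightarrow> nat list \<Rightarrow> real" where
  "Pi q r xs = (\<Sum>s\<in>{1..<length xs}. q * real r * real (cS r (take s xs)) / real s)"
definition Mg :: "real \<Rightarrow> nat \<Rightarrow> nat list \<Rightarrow> real" where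
  "Mg q r xs = real (cA (Suc r) xs) - Pi q r xs"

lemma Pi_snoc:
  assumes "xs \<noteq> []"
  shows "Pi q r (xs @ [y]) = Pi q r xs + pi_r q r xs"
proof -
  have e: "{1..<length (xs @ [y])} = insert (length xs) {1..<length xs}" using assms by (cases xs) auto
  have "Pi q r (xs @ [y]) = q * real r * real (cS r xs) / real (length xs) +
      (\<Sum>s\<in>{1..<length xs}. q * real r * real (cS r (take s (xs @ [y]))) / real s)"
    unfolding Pi_def e by (subst sum.insert) auto
  also have "(\<Sum>s\<in>{1..<length xs}. q * real r * real (cS r (take s (xs @ [y]))) / real s) = Pi q r xs"
    unfolding Pi_def by (intro sum.cong) auto
  finally show ?thesis by (simp add: pi_r_def)
qed

lemma supp_facts:
  assumes "s \<in> set_pmf (yule_chain q m)"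
  shows "snd s \<noteq> []" "Suc (fst s) \<notin> set (snd s)" "length (snd s) = Suc m"
  using yule_chain_inv[OF assms] by auto

lemma exp_step_J:
  fixes G :: "real \<Rightarrow> real"
  assumes "xs \<noteq> []" "Suc nt \<notin> set xs" "0 \<le> q" "q \<le> 1" "1 \<le> r"
  shows "measure_pmf.expectation (yule_step q (nt, xs))
      (\<lambda>s'. G (if count_list xs (last (snd s')) = r then 1 else 0))
     = G 0 + (G 1 - G 0) * pi_r q r xs"
proof -
  let ?J = "\<lambda>u. (if count_list xs (xs ! u) = r then 1 else 0 :: real)"
  have cn: "count_list xs (Suc nt) = 0" using assms(2) by (simp add: count_notin)
  have "measure_pmf.expectation (yule_step q (nt, xs))
      (\<lambda>s'. G (if count_list xs (last (snd s')) = r then 1 else 0))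
    = (\<Sum>u<length xs. q * G (?J u) + (1 - q) * G 0) / length xs"
    using assms cn by (subst exp_step) auto
  also have "\<dots> = (\<Sum>u<length xs. G 0 + (q * (G 1 - G 0)) * ?J u) / length xs"
    by (intro arg_cong2[where f="(/)"] sum.cong) (auto simp: algebra_simps)
  also have "(\<Sum>u<length xs. G 0 + (q * (G 1 - G 0)) * ?J u) = length xs * G 0 + (q * (G 1 - G 0)) * (\<Sum>u<length xs. ?J u)"
    by (simp only: sum.distrib sum_distrib_left[symmetric]) simp
  also have "(length xs * G 0 + (q * (G 1 - G 0)) * (\<Sum>u<length xs. ?J u)) / length xs = G 0 + (G 1 - G 0) * pi_r q r xs"
    using assms(1) unfolding positions_count pi_r_def by (simp add: field_simps)
  finally show ?thesis .
qed

lemma step_supp_snoc: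
  assumes "xs \<noteq> []" "s' \<in> set_pmf (yule_step q (nt, xs))"
  shows "snd s' = xs @ [last (snd s')]"
  using set_yule_step[OF assms(1), of q nt] assms(2) by auto

lemma exp_step_cA:
  assumes "s \<in> set_pmf (yule_chain q m)" "0 \<le> q" "q \<le> 1" "1 \<le> r"
  shows "measure_pmf.expectation (yule_step q s) (\<lambda>s'. real (cA (Suc r) (snd s')))
     = real (cA (Suc r) (snd s)) + pi_r q r (snd s)"
proof -
  obtain nt xs where e: "s = (nt, xs)" by (cases s)
  have f: "xs \<noteq> []" "Suc nt \<notin> set xs" using supp_facts[OF assms(1)] e by auto
  have "measure_pmf.expectation (yule_step q (nt, xs)) (\<lambda>s'. real (cA (Suc r) (snd s')))
     = measure_pmf.expectation (yule_step q (nt, xs))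
      (\<lambda>s'. (\<lambda>x. real (cA (Suc r) xs) + x) (if count_list xs (last (snd s')) = r then 1 else 0))"
  proof (intro exp_cong_supp)
    fix s' assume "s' \<in> set_pmf (yule_step q (nt, xs))"
    then have sn: "snd s' = xs @ [last (snd s')]" using step_supp_snoc f by blast
    have "cA (Suc r) (snd s') = cA (Suc r) xs + (if count_list xs (last (snd s')) = r then 1 else 0)"
      by (subst sn, subst cA_snoc) auto
    then show "real (cA (Suc r) (snd s')) = real (cA (Suc r) xs) + (if count_list xs (last (snd s')) = r then 1 else 0)"
      by simp
  qed
  also have "\<dots> = real (cA (Suc r) xs) + pi_r q r xs"
    by (subst exp_step_J) (use f assms in auto)
  finally show ?thesis using e by simp
qed

lemma exp_step_Mg2:
  assumes "s \<in> set_pmf (yule_chain q m)" "0 \<le> q" "q \<le> 1" "1 \<le> r"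
  shows "measure_pmf.expectation (yule_step q s) (\<lambda>s'. (Mg q r (snd s'))\<^sup>2)
     = (Mg q r (snd s))\<^sup>2 + pi_r q r (snd s) - (pi_r q r (snd s))\<^sup>2"
proof -
  obtain nt xs where e: "s = (nt, xs)" by (cases s)
  have f: "xs \<noteq> []" "Suc nt \<notin> set xs" using supp_facts[OF assms(1)] e by auto
  let ?c = "Mg q r xs - pi_r q r xs"
  have "measure_pmf.expectation (yule_step q (nt, xs)) (\<lambda>s'. (Mg q r (snd s'))\<^sup>2)
     = measure_pmf.expectation (yule_step q (nt, xs))
      (\<lambda>s'. (\<lambda>x. (?c + x)\<^sup>2) (if count_list xs (last (snd s')) = r then 1 else 0))"
  proof (intro exp_cong_supp)
    fix s' assume "s' \<in> set_pmf (yule_step q (nt, xs))"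
    then have sn: "snd s' = xs @ [last (snd s')]" using step_supp_snoc f by blast
    have "cA (Suc r) (snd s') = cA (Suc r) xs + (if count_list xs (last (snd s')) = r then 1 else 0)"
      by (subst sn, subst cA_snoc) auto
    then show "(Mg q r (snd s'))\<^sup>2 = (?c + (if count_list xs (last (snd s')) = r then 1 else 0))\<^sup>2"
      unfolding Mg_def using Pi_snoc[OF f(1), of q r "last (snd s')"] sn
      by (auto simp: algebra_simps)
  qed
  also have "\<dots> = ?c\<^sup>2 + ((?c + 1)\<^sup>2 - ?c\<^sup>2) * pi_r q r xs"
    by (subst exp_step_J) (use f assms in auto)
  also have "\<dots> = (Mg q r xs)\<^sup>2 + pi_r q r xs - (pi_r q r xs)\<^sup>2"
    by (simp add: power2_eq_square algebra_simps)
  finally show ?thesis using e by simp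
qed

lemma exp_step_card:
  assumes "s \<in> set_pmf (yule_chain q m)" "0 \<le> q" "q \<le> 1"
  shows "measure_pmf.expectation (yule_step q s) (\<lambda>s'. real (card (set (snd s'))))
     = real (card (set (snd s))) + (1 - q)"
proof -
  obtain nt xs where e: "s = (nt, xs)" by (cases s)
  have f: "xs \<noteq> []" "Suc nt \<notin> set xs" using supp_facts[OF assms(1)] e by auto
  have "measure_pmf.expectation (yule_step q (nt, xs)) (\<lambda>s'. real (card (set (snd s'))))
    = (\<Sum>u<length xs. q * real (card (set xs)) + (1 - q) * (real (card (set xs)) + 1)) / length xs"
    using f assms by (subst exp_step) (auto intro!: arg_cong2[where f="(/)"] sum.cong simp: insert_absorb)
  also have "\<dots> = real (card (set xs)) + (1 - q)"
    using f by (simp add: field_simps)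
  finally show ?thesis using e by simp
qed

lemma exp_card_chain:
  assumes "0 \<le> q" "q \<le> 1"
  shows "measure_pmf.expectation (yule_chain q m) (\<lambda>s. real (card (set (snd s)))) = 1 + real m * (1 - q)"
proof (induction m)
  case 0 then show ?case by simp
next
  case (Suc m)
  have "measure_pmf.expectation (yule_chain q (Suc m)) (\<lambda>s. real (card (set (snd s))))
     = measure_pmf.expectation (yule_chain q m) (\<lambda>s. real (card (set (snd s))) + (1 - q))"
    by (subst exp_chain_Suc, intro exp_cong_supp exp_step_card) (use assms in auto)
  also have "\<dots> = 1 + real (Suc m) * (1 - q)"
    using Suc by (simp add: integrable_measure_pmf_finite finite_yule_chain algebra_simps)
  finally show ?case .
qed



lemma int_chain[simp]: "integrable (measure_pmf (yule_chain q m)) (f :: _ \<Rightarrow> real)"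
  by (simp add: integrable_measure_pmf_finite finite_yule_chain)

lemma exp_cA_Suc:
  assumes "0 \<le> q" "q \<le> 1" "1 \<le> r"
  shows "measure_pmf.expectation (yule_chain q (Suc m)) (\<lambda>s. real (cA (Suc r) (snd s)))
    = measure_pmf.expectation (yule_chain q m) (\<lambda>s. real (cA (Suc r) (snd s)))
      + measure_pmf.expectation (yule_chain q m) (\<lambda>s. pi_r q r (snd s))"
proof -
  have "measure_pmf.expectation (yule_chain q (Suc m)) (\<lambda>s. real (cA (Suc r) (snd s)))
     = measure_pmf.expectation (yule_chain q m) (\<lambda>s. real (cA (Suc r) (snd s)) + pi_r q r (snd s))"
    by (subst exp_chain_Suc, intro exp_cong_supp exp_step_cA) (use assms in auto)
  then show ?thesis by simp
qed

lemma exp_Mg2_Suc: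
  assumes "0 \<le> q" "q \<le> 1" "1 \<le> r"
  shows "measure_pmf.expectation (yule_chain q (Suc m)) (\<lambda>s. (Mg q r (snd s))\<^sup>2)
    \<le> measure_pmf.expectation (yule_chain q m) (\<lambda>s. (Mg q r (snd s))\<^sup>2)
      + measure_pmf.expectation (yule_chain q m) (\<lambda>s. pi_r q r (snd s))"
proof -
  have "measure_pmf.expectation (yule_chain q (Suc m)) (\<lambda>s. (Mg q r (snd s))\<^sup>2)
     = measure_pmf.expectation (yule_chain q m) (\<lambda>s. (Mg q r (snd s))\<^sup>2 + pi_r q r (snd s) - (pi_r q r (snd s))\<^sup>2)"
    by (subst exp_chain_Suc, intro exp_cong_supp exp_step_Mg2) (use assms in auto)
  also have "\<dots> \<le> measure_pmf.expectation (yule_chain q m) (\<lambda>s. (Mg q r (snd s))\<^sup>2 + pi_r q r (snd s))"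
    by (intro exp_mono_supp finite_yule_chain) auto
  finally show ?thesis by simp
qed

lemma Mg2_le_cA:
  assumes "0 \<le> q" "q \<le> 1" "1 \<le> r"
  shows "measure_pmf.expectation (yule_chain q m) (\<lambda>s. (Mg q r (snd s))\<^sup>2)
    \<le> measure_pmf.expectation (yule_chain q m) (\<lambda>s. real (cA (Suc r) (snd s)))"
proof (induction m)
  case 0
  have "Mg q r [1] = 0" using assms by (simp add: Mg_def Pi_def cA_def)
  then show ?case by simp
next
  case (Suc m)
  then show ?case using exp_Mg2_Suc[OF assms, of m] exp_cA_Suc[OF assms, of m] by linarith
qed

lemma pi_r_le:
  assumes "s \<in> set_pmf (yule_chain q m)" "0 \<le> q" "1 \<le> r"
  shows "pi_r q r (snd s) \<le> q * real r * real (cA r (snd s)) / real (Suc m)"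
proof -
  have "cS r (snd s) \<le> cA r (snd s)" using cS_eq[OF assms(3)] by simp
  moreover have "length (snd s) = Suc m" using supp_facts(3)[OF assms(1)] .
  ultimately show ?thesis using assms(2)
    unfolding pi_r_def by (simp only:) (intro divide_right_mono mult_left_mono, auto)
qed

lemma cA_bound:
  assumes "0 \<le> q" "q \<le> 1"
  shows "measure_pmf.expectation (yule_chain q m) (\<lambda>s. real (cA (Suc r) (snd s)))
      \<le> fact r * q ^ r * real (Suc m)"
proof (induction r arbitrary: m)
  case 0
  have "measure_pmf.expectation (yule_chain q m) (\<lambda>s. real (cA (Suc 0) (snd s)))
     \<le> measure_pmf.expectation (yule_chain q m) (\<lambda>s. real (Suc m))"
  proof (intro exp_mono_supp finite_yule_chain)
    fix s assume s: "s \<in> set_pmf (yule_chain q m)"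
    have "cA (Suc 0) (snd s) = card (set (snd s))" using cA_one by simp
    also have "\<dots> \<le> length (snd s)" by (rule card_length)
    finally show "real (cA (Suc 0) (snd s)) \<le> real (Suc m)" using supp_facts(3)[OF s] by simp
  qed
  then show ?case by simp
next
  case (Suc r)
  note IHr = Suc.IH
  have r1: "1 \<le> Suc r" by simp
  have "measure_pmf.expectation (yule_chain q m) (\<lambda>s. real (cA (Suc (Suc r)) (snd s)))
      \<le> fact (Suc r) * q ^ (Suc r) * real m"
  proof (induction m)
    case 0
    then show ?case by (simp add: cA_def)
  next
    case (Suc m)
    have "measure_pmf.expectation (yule_chain q m) (\<lambda>s. pi_r q (Suc r) (snd s))
       \<le> measure_pmf.expectation (yule_chain q m) (\<lambda>s. q * real (Suc r) * real (cA (Suc r) (snd s)) / real (Suc m))"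
      by (intro exp_mono_supp finite_yule_chain pi_r_le) (use assms in auto)
    also have "\<dots> = q * real (Suc r) / real (Suc m) * measure_pmf.expectation (yule_chain q m) (\<lambda>s. real (cA (Suc r) (snd s)))"
      by simp
    also have "\<dots> \<le> q * real (Suc r) / real (Suc m) * (fact r * q ^ r * real (Suc m))"
      using IHr[of m] assms by (intro mult_left_mono) auto
    also have "\<dots> = fact (Suc r) * q ^ Suc r" by (simp add: field_simps)
    finally have "measure_pmf.expectation (yule_chain q m) (\<lambda>s. pi_r q (Suc r) (snd s)) \<le> fact (Suc r) * q ^ Suc r" .
    then show ?case using exp_cA_Suc[OF assms r1, of m] Suc.IH by (simp add: algebra_simps)
  qed
  also have "\<dots> \<le> fact (Suc r) * q ^ (Suc r) * real (Suc m)"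
    using assms by (intro mult_left_mono) auto
  finally show ?case .
qed



lemma prefix_map:
  assumes "k \<le> m"
  shows "map_pmf (\<lambda>s. take (Suc k) (snd s)) (yule_chain q m) = map_pmf snd (yule_chain q k)"
  using assms
proof (induction m rule: dec_induct)
  case base
  show ?case using supp_facts(3)[of _ q k] by (intro map_pmf_cong) auto
next
  case (step m)
  have "map_pmf (\<lambda>s. take (Suc k) (snd s)) (yule_chain q (Suc m))
      = bind_pmf (yule_chain q m) (\<lambda>s. map_pmf (\<lambda>s. take (Suc k) (snd s)) (yule_step q s))"
    by (simp add: map_bind_pmf)
  also have "\<dots> = bind_pmf (yule_chain q m) (\<lambda>s. return_pmf (take (Suc k) (snd s)))"
  proof (intro bind_pmf_cong refl)
    fix s assume s: "s \<in> set_pmf (yule_chain q m)"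
    obtain nt xs where e: "s = (nt, xs)" by (cases s)
    have f: "xs \<noteq> []" "length xs = Suc m" using supp_facts[OF s] e by auto
    have "map_pmf (\<lambda>s. take (Suc k) (snd s)) (yule_step q (nt, xs)) = map_pmf (\<lambda>_. take (Suc k) xs) (yule_step q (nt, xs))"
    proof (intro map_pmf_cong refl)
      fix s' assume "s' \<in> set_pmf (yule_step q (nt, xs))"
      then have "snd s' = xs @ [last (snd s')]" using step_supp_snoc f by blast
      then show "take (Suc k) (snd s') = take (Suc k) xs" using f step.hyps
        by (metis Suc_le_mono take_append diff_is_0_eq take_0 append_Nil2)
    qed
    then show "map_pmf (\<lambda>s. take (Suc k) (snd s)) (yule_step q s) = return_pmf (take (Suc k) (snd s))"
      using e by (simp add: map_pmf_const)
  qed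
  also have "\<dots> = map_pmf (\<lambda>s. take (Suc k) (snd s)) (yule_chain q m)"
    by (simp add: map_pmf_def)
  finally show ?case using step.IH by simp
qed

lemma prefix_prob:
  assumes "k \<le> m"
  shows "measure_pmf.prob (yule_chain q m) {s. P (take (Suc k) (snd s))}
       = measure_pmf.prob (yule_chain q k) {s. P (snd s)}"
  using arg_cong[OF prefix_map[OF assms, of q], of "\<lambda>M. measure_pmf.prob M {ys. P ys}"]
  by (simp add: measure_map_pmf vimage_def)

lemma Pi_lower:
  assumes "length xs = Suc m" "k \<le> m" "0 \<le> q" "1 \<le> r"
  shows "real (m - k) * (q * real r / real (Suc m)) *
           (real (cA r (take (Suc k) xs)) - real (cA (Suc r) xs)) \<le> Pi q r xs"
proof -
  let ?f = "\<lambda>s. q * real r * real (cS r (take s xs)) / real s"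
  let ?D = "real (cA r (take (Suc k) xs)) - real (cA (Suc r) xs)"
  have "(\<Sum>s\<in>{Suc k..<Suc m}. q * real r / real (Suc m) * ?D) \<le> (\<Sum>s\<in>{Suc k..<Suc m}. ?f s)"
  proof (intro sum_mono)
    fix s assume s: "s \<in> {Suc k..<Suc m}"
    have a: "cA r (take (Suc k) xs) \<le> cA r (take s xs)" using s assms by (intro cA_take_mono) auto
    have b: "cA (Suc r) (take s xs) \<le> cA (Suc r) xs" by (intro cA_take_le) auto
    have "cS r (take s xs) = cA r (take s xs) - cA (Suc r) (take s xs)"
         "cA (Suc r) (take s xs) \<le> cA r (take s xs)" using cS_eq[OF assms(4)] by auto
    then have D: "?D \<le> real (cS r (take s xs))" using a b by linarith
    have qr: "0 \<le> q * real r" using assms by simp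
    have "q * real r / real (Suc m) * ?D \<le> q * real r / real (Suc m) * real (cS r (take s xs))"
      using D qr by (intro mult_left_mono) auto
    also have "\<dots> \<le> ?f s"
      using s qr by (simp add: divide_simps mult_left_mono)
    finally show "q * real r / real (Suc m) * ?D \<le> ?f s" .
  qed
  also have "\<dots> \<le> (\<Sum>s\<in>{1..<length xs}. ?f s)"
    using assms by (intro sum_mono2) auto
  finally have X: "(\<Sum>s\<in>{Suc k..<Suc m}. q * real r / real (Suc m) * ?D) \<le> Pi q r xs"
    unfolding Pi_def .
  have "(\<Sum>s\<in>{Suc k..<Suc m}. q * real r / real (Suc m) * ?D) = real (m - k) * (q * real r / real (Suc m) * ?D)"
    by simp
  then show ?thesis using X by (simp only: mult.assoc)
qed



lemma markov_cA:
  assumes "0 \<le> q" "q \<le> 1" "\<theta> > 0"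
  shows "measure_pmf.prob (yule_chain q m) {s. \<theta> \<le> real (cA (Suc r) (snd s))} \<le> fact r * q ^ r * real (Suc m) / \<theta>"
proof -
  have "measure_pmf.prob (yule_chain q m) {s. \<theta> \<le> real (cA (Suc r) (snd s))}
     \<le> measure_pmf.expectation (yule_chain q m) (\<lambda>s. real (cA (Suc r) (snd s))) / \<theta>"
    using assms by (intro markov_pmf finite_yule_chain) auto
  also have "\<dots> \<le> fact r * q ^ r * real (Suc m) / \<theta>"
    using assms cA_bound[OF assms(1,2)] by (intro divide_right_mono) auto
  finally show ?thesis .
qed

lemma cheb_Mg:
  assumes "0 \<le> q" "q \<le> 1" "\<theta> > 0" "1 \<le> r"
  shows "measure_pmf.prob (yule_chain q m) {s. \<theta> \<le> \<bar>Mg q r (snd s)\<bar>} \<le> fact r * q ^ r * real (Suc m) / \<theta>\<^sup>2"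
proof -
  have "measure_pmf.prob (yule_chain q m) {s. \<theta> \<le> \<bar>Mg q r (snd s)\<bar>}
     \<le> measure_pmf.prob (yule_chain q m) {s. \<theta>\<^sup>2 \<le> (Mg q r (snd s))\<^sup>2}"
  proof (intro prob_mono_supp, simp)
    fix s assume "\<theta> \<le> \<bar>Mg q r (snd s)\<bar>"
    then have "\<theta>\<^sup>2 \<le> \<bar>Mg q r (snd s)\<bar>\<^sup>2" using assms(3) by (intro power_mono) auto
    then show "\<theta>\<^sup>2 \<le> (Mg q r (snd s))\<^sup>2" by simp
  qed
  also have "\<dots> \<le> measure_pmf.expectation (yule_chain q m) (\<lambda>s. (Mg q r (snd s))\<^sup>2) / \<theta>\<^sup>2"
    using assms by (intro markov_pmf finite_yule_chain) auto
  also have "\<dots> \<le> measure_pmf.expectation (yule_chain q m) (\<lambda>s. real (cA (Suc r) (snd s))) / \<theta>\<^sup>2"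
    using assms Mg2_le_cA[OF assms(1,2,4)] by (intro divide_right_mono) auto
  also have "\<dots> \<le> fact r * q ^ r * real (Suc m) / \<theta>\<^sup>2"
    using assms cA_bound[OF assms(1,2)] by (intro divide_right_mono) auto
  finally show ?thesis .
qed

lemma base_bound:
  assumes "0 \<le> q" "q \<le> 1"
  shows "measure_pmf.prob (yule_chain q m) {s. real (cA 1 (snd s)) < 1/2 * real (Suc m)} \<le> 2 * q"
proof -
  have "measure_pmf.prob (yule_chain q m) {s. real (cA 1 (snd s)) < 1/2 * real (Suc m)}
     \<le> measure_pmf.prob (yule_chain q m) {s. real (Suc m) / 2 \<le> real (Suc m) - real (card (set (snd s)))}"
  proof (intro prob_mono_supp)
    fix s assume "s \<in> {s. real (cA 1 (snd s)) < 1 / 2 * real (Suc m)}"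
    then have "real (card (set (snd s))) < 1 / 2 * real (Suc m)" by (simp only: cA_one mem_Collect_eq)
    then show "s \<in> {s. real (Suc m) / 2 \<le> real (Suc m) - real (card (set (snd s)))}" by simp
  qed
  also have "\<dots> \<le> measure_pmf.expectation (yule_chain q m) (\<lambda>s. real (Suc m) - real (card (set (snd s)))) / (real (Suc m) / 2)"
  proof (intro markov_pmf finite_yule_chain)
    fix s assume s: "s \<in> set_pmf (yule_chain q m)"
    have "card (set (snd s)) \<le> length (snd s)" by (rule card_length)
    then show "0 \<le> real (Suc m) - real (card (set (snd s)))" using supp_facts(3)[OF s] by simp
  qed auto
  also have "measure_pmf.expectation (yule_chain q m) (\<lambda>s. real (Suc m) - real (card (set (snd s)))) = real m * q"
    using exp_card_chain[OF assms, of m] by (simp add: algebra_simps)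
  also have "real m * q / (real (Suc m) / 2) \<le> 2 * q"
    using assms by (simp add: field_simps mult_right_mono)
  finally show ?thesis .
qed



lemma det_step:
  assumes s: "s \<in> set_pmf (yule_chain q m)" and q: "0 \<le> q" and r: "1 \<le> r" and m: "1 \<le> m"
    and c: "c > 0"
    and h1: "c * real (Suc (m div 2)) * q ^ (r - 1) \<le> real (cA r (take (Suc (m div 2)) (snd s)))"
    and h2: "real (cA (Suc r) (snd s)) < c / 4 * real (Suc m) * q ^ (r - 1)"
    and h3: "\<bar>Mg q r (snd s)\<bar> < real r * c / 32 * real (Suc m) * q ^ r"
  shows "real r * c / 32 * real (Suc m) * q ^ r \<le> real (cA (Suc r) (snd s))"
proof -
  define k where "k = m div 2"
  define T where "T = real (Suc m)"
  define Q where "Q = q ^ (r - 1)"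
  have qr: "q ^ r = q * Q" unfolding Q_def using r by (metis Suc_diff_le diff_Suc_1 power_Suc)
  have Q0: "0 \<le> Q" unfolding Q_def using q by simp
  have T0: "0 < T" unfolding T_def by simp
  have skn: "Suc m \<le> 2 * Suc k" unfolding k_def by presburger
  have sk: "T \<le> 2 * real (Suc k)" unfolding T_def using skn by (metis of_nat_le_iff of_nat_mult of_nat_numeral)
  have mkn: "Suc m \<le> 4 * (m - k)" unfolding k_def using m by presburger
  have mk': "T \<le> 4 * real (m - k)" unfolding T_def using mkn by (metis of_nat_le_iff of_nat_mult of_nat_numeral)
  have mk: "T / 4 \<le> real (m - k)" using mk' by simp
  have "c * (T / 2) * Q \<le> c * real (Suc k) * Q"
    using sk c Q0 by (intro mult_right_mono mult_left_mono) auto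
  then have h1': "c * (T / 2) * Q \<le> real (cA r (take (Suc k) (snd s)))" using h1 unfolding k_def Q_def by linarith
  define D where "D = real (cA r (take (Suc k) (snd s))) - real (cA (Suc r) (snd s))"
  have h2': "real (cA (Suc r) (snd s)) < c / 4 * T * Q" using h2 unfolding T_def Q_def .
  have eq2: "c * (T / 2) * Q = 2 * (c / 4 * T * Q)" by simp
  have D: "c / 4 * T * Q \<le> D" unfolding D_def using h1' h2' eq2 by linarith
  have "0 \<le> c / 4 * T * Q" using c T0 Q0 by simp
  then have D0: "0 \<le> D" using D by linarith
  have len: "length (snd s) = Suc m" using supp_facts(3)[OF s] .
  have "real (m - k) * (q * real r / T) * D \<le> Pi q r (snd s)"
    unfolding T_def D_def using Pi_lower[OF len _ q r, of k] unfolding k_def by simp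
  moreover have "T / 4 * (q * real r / T) * D \<le> real (m - k) * (q * real r / T) * D"
    using mk D0 q T0 by (intro mult_right_mono) auto
  moreover have "T / 4 * (q * real r / T) * (c / 4 * T * Q) \<le> T / 4 * (q * real r / T) * D"
    using D q T0 by (intro mult_left_mono) auto
  moreover have "T / 4 * (q * real r / T) * (c / 4 * T * Q) = real r * c / 16 * T * (q * Q)"
    using T0 by (simp add: field_simps)
  ultimately have P: "real r * c / 16 * T * q ^ r \<le> Pi q r (snd s)" unfolding qr by linarith
  have "real (cA (Suc r) (snd s)) = Mg q r (snd s) + Pi q r (snd s)" unfolding Mg_def by simp
  moreover have "- \<bar>Mg q r (snd s)\<bar> \<le> Mg q r (snd s)" by simp
  moreover have "real r * c / 16 * T * q ^ r = 2 * (real r * c / 32 * T * q ^ r)" by simp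
  ultimately show ?thesis using P h3 unfolding T_def by linarith
qed



lemma prob_un3:
  "measure_pmf.prob p (A \<union> B \<union> C) \<le> measure_pmf.prob p A + measure_pmf.prob p B + measure_pmf.prob p C"
proof -
  have "measure_pmf.prob p (A \<union> B \<union> C) \<le> measure_pmf.prob p (A \<union> B) + measure_pmf.prob p C"
    by (rule measure_Un_le) auto
  also have "measure_pmf.prob p (A \<union> B) \<le> measure_pmf.prob p A + measure_pmf.prob p B"
    by (rule measure_Un_le) auto
  finally show ?thesis by simp
qed

lemma aux_eq2:
  fixes f Q W X c :: real
  assumes "W > 0" "X > 0" "c > 0"
  shows "f * (Q * W) * X / (c / 4 * X * W) = 4 * f / c * Q"
  using assms by (simp add: field_simps)

lemma aux_eq3:
  fixes f Y X a :: real
  assumes "X * Y > 0" "a > 0"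
  shows "f * Y * X / (a * X * Y)\<^sup>2 = f * (1 / a)\<^sup>2 * inverse (X * Y)"
  using assms by (simp add: field_simps power2_eq_square)

lemma lowerA:
  assumes "1 \<le> r"
  shows "\<exists>c>0. \<forall>q m. (\<forall>n. 0 \<le> q n \<and> q n \<le> 1) \<longrightarrow> (q \<longlonglongrightarrow> 0) \<longrightarrow>
     filterlim (\<lambda>n. real (Suc (m n)) * q n ^ (r - 1)) at_top sequentially \<longrightarrow>
     ((\<lambda>n. measure_pmf.prob (yule_chain (q n) (m n))
         {s. real (cA r (snd s)) < c * real (Suc (m n)) * q n ^ (r - 1)}) \<longlonglongrightarrow> 0)"
  using assms
proof (induction r rule: dec_induct)
  case base
  show ?case
  proof (intro exI[of _ "1/2"] conjI allI impI)
    fix q :: "nat \<Rightarrow> real" and m :: "nat \<Rightarrow> nat"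
    assume q01: "\<forall>n. 0 \<le> q n \<and> q n \<le> 1" and qlim: "q \<longlonglongrightarrow> 0"
    have L2: "((\<lambda>n. 2 * q n) \<longlonglongrightarrow> 0)" using tendsto_mult_right_zero[OF qlim] .
    have E1: "\<forall>\<^sub>F n in sequentially. measure_pmf.prob (yule_chain (q n) (m n))
         {s. real (cA 1 (snd s)) < 1/2 * real (Suc (m n)) * q n ^ (1 - 1)} \<le> 2 * q n"
    proof (intro always_eventually allI)
      fix n
      show "measure_pmf.prob (yule_chain (q n) (m n))
         {s. real (cA 1 (snd s)) < 1/2 * real (Suc (m n)) * q n ^ (1 - 1)} \<le> 2 * q n"
        using base_bound[of "q n" "m n"] q01 by simp
    qed
    have E0: "\<forall>\<^sub>F n in sequentially. 0 \<le> measure_pmf.prob (yule_chain (q n) (m n))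
         {s. real (cA 1 (snd s)) < 1/2 * real (Suc (m n)) * q n ^ (1 - 1)}"
      by (intro always_eventually allI measure_nonneg)
    show "((\<lambda>n. measure_pmf.prob (yule_chain (q n) (m n))
         {s. real (cA 1 (snd s)) < 1/2 * real (Suc (m n)) * q n ^ (1 - 1)}) \<longlonglongrightarrow> 0)"
      by (rule tendsto_sandwich[OF E0 E1 tendsto_const L2])
  qed simp
next
  case (step r)
  from step.IH obtain c where c: "c > 0" and H: "\<forall>q m. (\<forall>n. 0 \<le> q n \<and> q n \<le> 1) \<longrightarrow> (q \<longlonglongrightarrow> 0) \<longrightarrow>
     filterlim (\<lambda>n. real (Suc (m n)) * q n ^ (r - 1)) at_top sequentially \<longrightarrow>
     ((\<lambda>n. measure_pmf.prob (yule_chain (q n) (m n))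
         {s. real (cA r (snd s)) < c * real (Suc (m n)) * q n ^ (r - 1)}) \<longlonglongrightarrow> 0)" by blast
  have r1: "1 \<le> r" using step.hyps(1) by simp
  show ?case
  proof (intro exI[of _ "real r * c / 32"] conjI allI impI)
    show "real r * c / 32 > 0" using r1 c by simp
    fix q :: "nat \<Rightarrow> real" and m :: "nat \<Rightarrow> nat"
    assume q01: "\<forall>n. 0 \<le> q n \<and> q n \<le> 1" and qlim: "q \<longlonglongrightarrow> 0"
      and lim0: "filterlim (\<lambda>n. real (Suc (m n)) * q n ^ (Suc r - 1)) at_top sequentially"
    have lim: "filterlim (\<lambda>n. real (Suc (m n)) * q n ^ r) at_top sequentially" using lim0 by simp
    define k where "k n = m n div 2" for n
    have "filterlim (\<lambda>n. 1/2 * (real (Suc (m n)) * q n ^ r)) at_top sequentially"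
      by (rule filterlim_tendsto_pos_mult_at_top[OF tendsto_const _ lim]) simp
    moreover have "\<forall>\<^sub>F n in sequentially. 1/2 * (real (Suc (m n)) * q n ^ r) \<le> real (Suc (k n)) * q n ^ (r - 1)"
    proof (intro always_eventually allI)
      fix n
      have an: "Suc (m n) \<le> 2 * Suc (k n)" unfolding k_def by presburger
      then have "real (Suc (m n)) \<le> 2 * real (Suc (k n))" by (metis of_nat_le_iff of_nat_mult of_nat_numeral)
      then have a: "1/2 * real (Suc (m n)) \<le> real (Suc (k n))" by simp
      have b: "q n ^ r \<le> q n ^ (r - 1)" using q01 by (intro power_decreasing) auto
      have "1/2 * (real (Suc (m n)) * q n ^ r) = (1/2 * real (Suc (m n))) * q n ^ r" by simp
      also have "\<dots> \<le> real (Suc (k n)) * q n ^ (r - 1)"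
        using a b q01 by (intro mult_mono) auto
      finally show "1/2 * (real (Suc (m n)) * q n ^ r) \<le> real (Suc (k n)) * q n ^ (r - 1)" .
    qed
    ultimately have limk: "filterlim (\<lambda>n. real (Suc (k n)) * q n ^ (r - 1)) at_top sequentially"
      by (rule filterlim_at_top_mono)
    have P1: "((\<lambda>n. measure_pmf.prob (yule_chain (q n) (k n))
         {s. real (cA r (snd s)) < c * real (Suc (k n)) * q n ^ (r - 1)}) \<longlonglongrightarrow> 0)"
      using H q01 qlim limk by blast
    have P1eq: "measure_pmf.prob (yule_chain (q n) (k n))
         {s. real (cA r (snd s)) < c * real (Suc (k n)) * q n ^ (r - 1)}
       = measure_pmf.prob (yule_chain (q n) (m n))
         {s. real (cA r (take (Suc (k n)) (snd s))) < c * real (Suc (k n)) * q n ^ (r - 1)}" for n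
      by (rule prefix_prob[symmetric]) (simp add: k_def)
    define P2b where "P2b n = 4 * fact r / c * q n" for n
    define P3b where "P3b n = fact r * (32 / (real r * c))\<^sup>2 * inverse (real (Suc (m n)) * q n ^ r)" for n
    have P2lim: "P2b \<longlonglongrightarrow> 0" unfolding P2b_def by (rule tendsto_mult_right_zero[OF qlim])
    have P3lim: "P3b \<longlonglongrightarrow> 0" unfolding P3b_def by (rule tendsto_mult_right_zero[OF tendsto_inverse_0_at_top[OF lim]])
    have ev: "\<forall>\<^sub>F n in sequentially. 1 < real (Suc (m n)) * q n ^ r"
      using lim by (simp add: filterlim_at_top_dense)
    have main: "\<forall>\<^sub>F n in sequentially. measure_pmf.prob (yule_chain (q n) (m n))
         {s. real (cA (Suc r) (snd s)) < real r * c / 32 * real (Suc (m n)) * q n ^ (Suc r - 1)}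
       \<le> measure_pmf.prob (yule_chain (q n) (k n))
         {s. real (cA r (snd s)) < c * real (Suc (k n)) * q n ^ (r - 1)} + P2b n + P3b n"
      using ev
    proof eventually_elim
      case (elim n)
      define Q where "Q = q n"
      define M where "M = m n"
      have Q01: "0 \<le> Q" "Q \<le> 1" using q01 unfolding Q_def by auto
      have X: "1 < real (Suc M) * Q ^ r" using elim unfolding Q_def M_def .
      have Qpos: "0 < Q"
      proof (rule ccontr)
        assume "\<not> 0 < Q" then have "Q = 0" using Q01 by simp
        then show False using X r1 by (simp add: power_0_left)
      qed
      have M1: "1 \<le> M"
      proof (rule ccontr)
        assume "\<not> 1 \<le> M" then have "M = 0" by simp
        moreover have "Q ^ r \<le> 1" using Q01 by (simp add: power_le_one)
        ultimately show False using X by simp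
      qed
      define B1 where "B1 = {s :: nat \<times> nat list. real (cA r (take (Suc (M div 2)) (snd s))) < c * real (Suc (M div 2)) * Q ^ (r - 1)}"
      define B2 where "B2 = {s :: nat \<times> nat list. c / 4 * real (Suc M) * Q ^ (r - 1) \<le> real (cA (Suc r) (snd s))}"
      define B3 where "B3 = {s :: nat \<times> nat list. real r * c / 32 * real (Suc M) * Q ^ r \<le> \<bar>Mg Q r (snd s)\<bar>}"
      have "measure_pmf.prob (yule_chain Q M)
         {s. real (cA (Suc r) (snd s)) < real r * c / 32 * real (Suc M) * Q ^ (Suc r - 1)}
          \<le> measure_pmf.prob (yule_chain Q M) (B1 \<union> B2 \<union> B3)"
      proof (intro prob_mono_supp)
        fix s assume s: "s \<in> set_pmf (yule_chain Q M)"
          and t: "s \<in> {s. real (cA (Suc r) (snd s)) < real r * c / 32 * real (Suc M) * Q ^ (Suc r - 1)}"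
        show "s \<in> B1 \<union> B2 \<union> B3"
        proof (rule ccontr)
          assume "s \<notin> B1 \<union> B2 \<union> B3"
          then have h1: "c * real (Suc (M div 2)) * Q ^ (r - 1) \<le> real (cA r (take (Suc (M div 2)) (snd s)))"
            and h2: "real (cA (Suc r) (snd s)) < c / 4 * real (Suc M) * Q ^ (r - 1)"
            and h3: "\<bar>Mg Q r (snd s)\<bar> < real r * c / 32 * real (Suc M) * Q ^ r"
            unfolding B1_def B2_def B3_def by auto
          have "real r * c / 32 * real (Suc M) * Q ^ r \<le> real (cA (Suc r) (snd s))"
            by (rule det_step[OF s Q01(1) r1 M1 c h1 h2 h3])
          then show False using t by simp
        qed
      qed
      also have "\<dots> \<le> measure_pmf.prob (yule_chain Q M) B1 + measure_pmf.prob (yule_chain Q M) B2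
            + measure_pmf.prob (yule_chain Q M) B3" by (rule prob_un3)
      also have "measure_pmf.prob (yule_chain Q M) B2 \<le> fact r * Q ^ r * real (Suc M) / (c / 4 * real (Suc M) * Q ^ (r - 1))"
        unfolding B2_def using Q01 Qpos c by (intro markov_cA) auto
      also have "fact r * Q ^ r * real (Suc M) / (c / 4 * real (Suc M) * Q ^ (r - 1)) = P2b n"
      proof -
        have "Q ^ r = Q * Q ^ (r - 1)" using r1 by (metis Suc_diff_le diff_Suc_1 power_Suc)
        moreover have "0 < Q ^ (r - 1)" using Qpos by simp
        ultimately show ?thesis unfolding P2b_def Q_def[symmetric] using c aux_eq2[of "Q ^ (r - 1)" "real (Suc M)" c "fact r" Q]
          by simp
      qed
      also have "measure_pmf.prob (yule_chain Q M) B3 \<le> fact r * Q ^ r * real (Suc M) / (real r * c / 32 * real (Suc M) * Q ^ r)\<^sup>2"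
        unfolding B3_def using Q01 Qpos c r1 by (intro cheb_Mg) auto
      also have "fact r * Q ^ r * real (Suc M) / (real r * c / 32 * real (Suc M) * Q ^ r)\<^sup>2 = P3b n"
      proof -
        have "0 < real (Suc M) * Q ^ r" using Qpos by simp
        moreover have "32 / (real r * c) = 1 / (real r * c / 32)" by simp
        moreover have "real r * c / 32 > 0" using c r1 by simp
        ultimately show ?thesis unfolding P3b_def Q_def[symmetric] M_def[symmetric]
          using aux_eq3[of "real (Suc M)" "Q ^ r" "real r * c / 32" "fact r"] by simp
      qed
      also have "measure_pmf.prob (yule_chain Q M) B1 = measure_pmf.prob (yule_chain (q n) (k n))
         {s. real (cA r (snd s)) < c * real (Suc (k n)) * q n ^ (r - 1)}"
        using P1eq[of n] unfolding B1_def Q_def M_def k_def by (rule sym)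
      finally show ?case by (simp add: Q_def M_def)
    qed
    have L: "((\<lambda>n. measure_pmf.prob (yule_chain (q n) (k n))
         {s. real (cA r (snd s)) < c * real (Suc (k n)) * q n ^ (r - 1)} + P2b n + P3b n) \<longlonglongrightarrow> 0)"
      using tendsto_add[OF tendsto_add[OF P1 P2lim] P3lim] by simp
    have E0: "\<forall>\<^sub>F n in sequentially. 0 \<le> measure_pmf.prob (yule_chain (q n) (m n))
         {s. real (cA (Suc r) (snd s)) < real r * c / 32 * real (Suc (m n)) * q n ^ (Suc r - 1)}"
      by (intro always_eventually allI measure_nonneg)
    show "((\<lambda>n. measure_pmf.prob (yule_chain (q n) (m n))
         {s. real (cA (Suc r) (snd s)) < real r * c / 32 * real (Suc (m n)) * q n ^ (Suc r - 1)}) \<longlonglongrightarrow> 0)"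
      by (rule tendsto_sandwich[OF E0 main tendsto_const L])
  qed
qed



lemma my_powr_at_top:
  assumes "(e::real) > 0"
  shows "filterlim (\<lambda>x. x powr e) at_top at_top"
proof -
  have L: "filterlim (\<lambda>x. exp (e * ln x)) at_top at_top"
    by (rule filterlim_compose[OF exp_at_top filterlim_tendsto_pos_mult_at_top[OF tendsto_const]])
       (simp_all add: ln_at_top assms)
  have ev: "\<forall>\<^sub>F x in at_top. exp (e * ln x) = x powr e"
    using eventually_gt_at_top[of 0] by eventually_elim (simp add: powr_def)
  show ?thesis using L filterlim_cong[OF refl refl ev, of at_top] by blast
qed

lemma Delta_eq:
  assumes "s \<in> set_pmf (yule_chain q m)" "1 \<le> j"
  shows "real_of_int (Delta_types s j) = real (cA j (snd s)) - real (cA (Suc j) (snd s))"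
proof -
  have inv: "\<forall>x\<in>set (snd s). 1 \<le> x" using yule_chain_inv[OF assms(1)] by auto
  have e1: "{i::nat. 1 \<le> i \<and> real (type_count s i) > real j - 1} = {i. j \<le> count_list (snd s) i}"
  proof (intro set_eqI iffI)
    fix i assume "i \<in> {i. j \<le> count_list (snd s) i}"
    then have "j \<le> count_list (snd s) i" by simp
    moreover then have "i \<in> set (snd s)" using assms(2) by (intro count_list_pos_in) auto
    ultimately show "i \<in> {i::nat. 1 \<le> i \<and> real (type_count s i) > real j - 1}"
      using inv by (auto simp: type_count_def)
  qed (auto simp: type_count_def)
  have e2: "{i::nat. 1 \<le> i \<and> real (type_count s i) > real j} = {i. Suc j \<le> count_list (snd s) i}"
  proof (intro set_eqI iffI)
    fix i assume "i \<in> {i. Suc j \<le> count_list (snd s) i}"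
    then have "Suc j \<le> count_list (snd s) i" by simp
    moreover then have "i \<in> set (snd s)" by (intro count_list_pos_in) auto
    ultimately show "i \<in> {i::nat. 1 \<le> i \<and> real (type_count s i) > real j}"
      using inv by (auto simp: type_count_def)
  qed (auto simp: type_count_def)
  show ?thesis unfolding Delta_types_def N_types_def e1 e2 cA_def by simp
qed



lemma aux_eq4:
  fixes f q W X c :: real
  assumes "X * W > 0" "c > 0"
  shows "f * (q * W) * X / (c / 2 * X * W) = 2 * f / c * q"
proof -
  have "X \<noteq> 0" "W \<noteq> 0" using assms(1) by auto
  then show ?thesis using assms(2) by (simp add: field_simps)
qed

theorem corollary4p2:
  fixes l :: nat and a :: real and p :: "nat \<Rightarrow> real"
  assumes "l \<ge> 1" and "a > 0"
    and "\<And>n. 0 \<le> p n \<and> p n \<le> 1"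
    and "p \<sim>[sequentially] (\<lambda>n. a * real n powr (- 1 / real l))"
    and "j \<in> {1..l}"
  shows "\<forall>M::real. ((\<lambda>n. measure_pmf.prob (yule_at_tau (p n) n)
                {s. real_of_int (Delta_types s j) > M}) \<longlongrightarrow> 1) sequentially"
proof
  fix M :: real
  have j1: "1 \<le> j" and jl: "j \<le> l" using assms(5) by auto
  define g where "g n = a * real n powr (- 1 / real l)" for n
  have l0: "0 < real l" using assms(1) by simp
  have gl: "g \<longlonglongrightarrow> 0" unfolding g_def
    by (rule tendsto_mult_right_zero[OF tendsto_neg_powr[OF _ filterlim_real_sequentially]]) (use l0 in simp)
  have pg: "p \<sim>[sequentially] g" using assms(4) unfolding g_def by simp
  have plim: "p \<longlonglongrightarrow> 0" by (rule asymp_equiv_tendsto_transfer[OF asymp_equiv_symI[OF pg] gl])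
  define e where "e = 1 + real (j - 1) * (- 1 / real l)"
  have e0: "e > 0"
  proof -
    have "real (j - 1) < real l" using jl j1 by linarith
    then have "real (j - 1) / real l < 1" using l0 by simp
    then show ?thesis unfolding e_def by simp
  qed
  have "filterlim (\<lambda>n. real n powr e) at_top sequentially"
    by (rule filterlim_compose[OF my_powr_at_top[OF e0] filterlim_real_sequentially])
  then have L1: "filterlim (\<lambda>n. a ^ (j - 1) * real n powr e) at_top sequentially"
    by (intro filterlim_tendsto_pos_mult_at_top[OF tendsto_const]) (use assms(2) in simp_all)
  have "\<forall>\<^sub>F n in sequentially. a ^ (j - 1) * real n powr e = real n * g n ^ (j - 1)"
    using eventually_gt_at_top[of 0]
  proof eventually_elim
    case (elim n)
    then have "real n \<noteq> 0" by simp
    then have pp: "(real n powr (- 1 / real l)) ^ (j - 1) = real n powr (real (j - 1) * (- 1 / real l))"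
      by (rule powr_power)
    then have "g n ^ (j - 1) = a ^ (j - 1) * real n powr (real (j - 1) * (- 1 / real l))"
      unfolding g_def by (simp only: power_mult_distrib)
    moreover have "real n * real n powr (real (j - 1) * (- 1 / real l)) = real n powr e"
      unfolding e_def by (rule powr_mult_base) simp
    ultimately show ?case by (simp add: algebra_simps)
  qed
  then have glim: "filterlim (\<lambda>n. real n * g n ^ (j - 1)) at_top sequentially"
    using L1 filterlim_cong[OF refl refl, of "\<lambda>n. a ^ (j - 1) * real n powr e" "\<lambda>n. real n * g n ^ (j - 1)" sequentially at_top]
    by blast
  have eqv: "(\<lambda>n. real n * p n ^ (j - 1)) \<sim>[sequentially] (\<lambda>n. real n * g n ^ (j - 1))"
    by (intro asymp_equiv_mult asymp_equiv_refl asymp_equiv_power pg)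
  have plimT0: "filterlim (\<lambda>n. real n * p n ^ (j - 1)) at_top sequentially"
    by (rule asymp_equiv_at_top_transfer[OF asymp_equiv_symI[OF eqv] glim])
  have plimT: "filterlim (\<lambda>n. real (Suc (n - 1)) * p n ^ (j - 1)) at_top sequentially"
  proof (rule filterlim_at_top_mono[OF plimT0], intro always_eventually allI)
    fix n
    have "real n \<le> real (Suc (n - 1))" by simp
    then show "real n * p n ^ (j - 1) \<le> real (Suc (n - 1)) * p n ^ (j - 1)"
      using assms(3)[of n] by (intro mult_right_mono) auto
  qed
  obtain c where c: "c > 0" and H: "\<forall>q m. (\<forall>n. 0 \<le> q n \<and> q n \<le> 1) \<longrightarrow> (q \<longlonglongrightarrow> 0) \<longrightarrow>
     filterlim (\<lambda>n. real (Suc (m n)) * q n ^ (j - 1)) at_top sequentially \<longrightarrow>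
     ((\<lambda>n. measure_pmf.prob (yule_chain (q n) (m n))
         {s. real (cA j (snd s)) < c * real (Suc (m n)) * q n ^ (j - 1)}) \<longlonglongrightarrow> 0)"
    using lowerA[OF j1] by blast
  have P1: "((\<lambda>n. measure_pmf.prob (yule_chain (p n) (n - 1))
         {s. real (cA j (snd s)) < c * real (Suc (n - 1)) * p n ^ (j - 1)}) \<longlonglongrightarrow> 0)"
    by (rule H[rule_format, of p "\<lambda>n. n - 1"]) (use assms(3) plim plimT in auto)
  define P2b where "P2b n = 2 * fact j / c * p n" for n
  have P2lim: "P2b \<longlonglongrightarrow> 0" unfolding P2b_def by (rule tendsto_mult_right_zero[OF plim])
  have ev: "\<forall>\<^sub>F n in sequentially. 2 * \<bar>M\<bar> / c + 1 < real (Suc (n - 1)) * p n ^ (j - 1)"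
    using plimT unfolding filterlim_at_top_dense by blast
  have lower: "\<forall>\<^sub>F n in sequentially. 1 - (measure_pmf.prob (yule_chain (p n) (n - 1))
         {s. real (cA j (snd s)) < c * real (Suc (n - 1)) * p n ^ (j - 1)} + P2b n)
      \<le> measure_pmf.prob (yule_at_tau (p n) n) {s. real_of_int (Delta_types s j) > M}"
    using ev
  proof eventually_elim
    case (elim n)
    define q where "q = p n"
    define m where "m = n - 1"
    define T where "T = real (Suc m)"
    define Q where "Q = q ^ (j - 1)"
    have q01: "0 \<le> q" "q \<le> 1" using assms(3) unfolding q_def by auto
    have TQ: "2 * \<bar>M\<bar> / c + 1 < T * Q" using elim unfolding T_def Q_def q_def m_def .
    have TQ0: "0 < T * Q" using TQ c by (smt (verit) divide_nonneg_pos abs_ge_zero)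
    have Mlt: "M < c / 2 * T * Q"
    proof -
      have "2 * \<bar>M\<bar> / c < T * Q" using TQ by linarith
      then have "2 * \<bar>M\<bar> < c * (T * Q)" using c by (simp add: divide_less_eq mult.commute)
      then show ?thesis by simp
    qed
    define B1 where "B1 = {s :: nat \<times> nat list. real (cA j (snd s)) < c * T * Q}"
    define B2 where "B2 = {s :: nat \<times> nat list. c / 2 * T * Q \<le> real (cA (Suc j) (snd s))}"
    define G where "G = {s :: nat \<times> nat list. real_of_int (Delta_types s j) > M}"
    have "measure_pmf.prob (yule_chain q m) (UNIV - G) \<le> measure_pmf.prob (yule_chain q m) (B1 \<union> B2)"
    proof (intro prob_mono_supp)
      fix s assume s: "s \<in> set_pmf (yule_chain q m)" and ng: "s \<in> UNIV - G"
      show "s \<in> B1 \<union> B2"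
      proof (rule ccontr)
        assume "s \<notin> B1 \<union> B2"
        then have h1: "c * T * Q \<le> real (cA j (snd s))" and h2: "real (cA (Suc j) (snd s)) < c / 2 * T * Q"
          unfolding B1_def B2_def by auto
        have "real_of_int (Delta_types s j) = real (cA j (snd s)) - real (cA (Suc j) (snd s))"
          by (rule Delta_eq[OF s j1])
        moreover have "c * T * Q = 2 * (c / 2 * T * Q)" by simp
        ultimately have "M < real_of_int (Delta_types s j)" using h1 h2 Mlt by linarith
        then show False using ng unfolding G_def by simp
      qed
    qed
    also have "\<dots> \<le> measure_pmf.prob (yule_chain q m) B1 + measure_pmf.prob (yule_chain q m) B2"
      by (rule measure_Un_le) auto
    also have "measure_pmf.prob (yule_chain q m) B2 \<le> fact j * q ^ j * T / (c / 2 * T * Q)"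
      unfolding B2_def T_def using q01 c TQ0 unfolding T_def by (intro markov_cA) (auto simp: mult.assoc)
    also have "fact j * q ^ j * T / (c / 2 * T * Q) = P2b n"
    proof -
      have "q ^ j = q * Q" unfolding Q_def using j1 by (metis Suc_diff_le diff_Suc_1 power_Suc)
      then show ?thesis unfolding P2b_def q_def[symmetric] using aux_eq4[of T Q c "fact j" q] TQ0 c by simp
    qed
    finally have bad: "measure_pmf.prob (yule_chain q m) (UNIV - G) \<le> measure_pmf.prob (yule_chain q m) B1 + P2b n" by simp
    have "measure_pmf.prob (yule_chain q m) (UNIV - G) = 1 - measure_pmf.prob (yule_chain q m) G"
      using measure_pmf.prob_compl[of G "yule_chain q m"] by simp
    moreover have "yule_at_tau (p n) n = yule_chain q m" unfolding yule_at_tau_def q_def m_def ..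
    moreover have "B1 = {s. real (cA j (snd s)) < c * real (Suc (n - 1)) * p n ^ (j - 1)}"
      unfolding B1_def T_def Q_def q_def m_def ..
    ultimately show ?case using bad unfolding G_def q_def m_def by simp
  qed
  have L: "((\<lambda>n. 1 - (measure_pmf.prob (yule_chain (p n) (n - 1))
         {s. real (cA j (snd s)) < c * real (Suc (n - 1)) * p n ^ (j - 1)} + P2b n)) \<longlonglongrightarrow> 1)"
    using tendsto_diff[OF tendsto_const[of 1] tendsto_add[OF P1 P2lim]] by simp
  have upper: "\<forall>\<^sub>F n in sequentially. measure_pmf.prob (yule_at_tau (p n) n) {s. real_of_int (Delta_types s j) > M} \<le> 1"
    by (intro always_eventually allI measure_pmf.prob_le_1)
  show "((\<lambda>n. measure_pmf.prob (yule_at_tau (p n) n)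
                {s. real_of_int (Delta_types s j) > M}) \<longlongrightarrow> 1) sequentially"
    by (rule tendsto_sandwich[OF lower upper L tendsto_const])
qed

end
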